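(* Let $G$ be a graph with $n$ vertices, $m\geq 1$ edges and maximum degree $\Delta$, let $\mathcal{L}(G)$ be its line graph, and let $0\leq\alpha\leq 1$. Then $$S_{k}(A_{\alpha}(\mathcal{L}(G)))\leq 2k(\alpha \Delta-1)+(1-\alpha)S_{k}(Q(G))$$ for $1\leq k \leq s$, where $s=\min\{n,m\}$. If $m>n$, then $$S_{k}(A_{\alpha}(\mathcal{L}(G)))\leq 2\alpha k(\Delta-1)+2(1-\alpha)(m-k)$$ for $n+1\leq k \leq m$.
   Context: All graphs are simple and undirected. $A(G)$ is the adjacency matrix, $D(G)$ the diagonal degree matrix, $Q(G)=D(G)+A(G)$ the signless Laplacian, and $A_{\alpha}(G)=\alpha D(G)+(1-\alpha)A(G)$. For a real symmetric matrix $M$ with eigenvalues $\lambda_1(M)\geq\cdots\geq\lambda_n(M)$, $S_k(M)=\sum_{i=1}^k\lambda_i(M)$. The line graph $\mathcal{L}(G)$ has vertex set $E(G)$, two vertices being adjacent iff the corresponding edges of $G$ share an endpoint. *)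

theory Defs
  imports "Jordan_Normal_Form.Char_Poly"
begin

text \<open>Eigenvalues (with multiplicity) of a real square matrix whose characteristic
polynomial splits over the reals (e.g. a real symmetric matrix), listed in
non-increasing order.\<close>
definition eigvals :: "real mat \<Rightarrow> real list" where
  "eigvals M = (THE ls. sorted_wrt (\<ge>) ls \<and>
      char_poly M = prod_list (map (\<lambda>a. [:- a, 1:]) ls))"

definition S_k :: "nat \<Rightarrow> real mat \<Rightarrow> real" where
  "S_k k M = sum_list (take k (eigvals M))"

definition adj_mat :: "nat \<Rightarrow> (nat \<Rightarrow> nat \<Rightarrow> bool) \<Rightarrow> real mat" where
  "adj_mat n adj = mat n n (\<lambda>(i,j). if adj i j then 1 else 0)"

definition degree :: "nat \<Rightarrow> (nat \<Rightarrow> nat \<Rightarrow> bool) \<Rightarrow> nat \<Rightarrow> nat" where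
  "degree n adj i = card {j. j < n \<and> adj i j}"

definition deg_mat :: "nat \<Rightarrow> (nat \<Rightarrow> nat \<Rightarrow> bool) \<Rightarrow> real mat" where
  "deg_mat n adj = mat n n (\<lambda>(i,j). if i = j then real (degree n adj i) else 0)"

definition signless_laplacian :: "nat \<Rightarrow> (nat \<Rightarrow> nat \<Rightarrow> bool) \<Rightarrow> real mat" where
  "signless_laplacian n adj = deg_mat n adj + adj_mat n adj"

definition A_alpha :: "real \<Rightarrow> nat \<Rightarrow> (nat \<Rightarrow> nat \<Rightarrow> bool) \<Rightarrow> real mat" where
  "A_alpha \<alpha> n adj = \<alpha> \<cdot>\<^sub>m deg_mat n adj + (1 - \<alpha>) \<cdot>\<^sub>m adj_mat n adj"

definition simple_graph :: "nat \<Rightarrow> nat set set \<Rightarrow> bool" where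
  "simple_graph n E \<longleftrightarrow> (\<forall>e\<in>E. e \<subseteq> {..<n} \<and> card e = 2)"

definition graph_adj :: "nat set set \<Rightarrow> nat \<Rightarrow> nat \<Rightarrow> bool" where
  "graph_adj E i j \<longleftrightarrow> {i, j} \<in> E"

definition max_degree :: "nat \<Rightarrow> nat set set \<Rightarrow> nat" where
  "max_degree n E = Max {degree n (graph_adj E) i | i. i < n}"

text \<open>Line graph: its vertices (the edges of G) are indexed by {0..<card E} via a fixed
enumeration of E; spectra do not depend on the chosen enumeration.\<close>
definition edge_enum :: "nat set set \<Rightarrow> nat \<Rightarrow> nat set" where
  "edge_enum E = (SOME f. bij_betw f {..<card E} E)"

definition line_adj :: "nat set set \<Rightarrow> nat \<Rightarrow> nat \<Rightarrow> bool" where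
  "line_adj E i j \<longleftrightarrow> i \<noteq> j \<and> edge_enum E i \<inter> edge_enum E j \<noteq> {}"

end

theory Submission
  imports Defs "Jordan_Normal_Form.Schur_Decomposition"
begin

definition diagm :: "real list \<Rightarrow> real mat" where
 "diagm es = mat (length es) (length es) (\<lambda>(i,j). if i = j then es!i else 0)"

lemma real_dot_self_nonneg: "(v::real vec) \<bullet> v \<ge> 0"
  unfolding scalar_prod_def by (auto intro: sum_nonneg)

lemma spectral_aux:
  fixes A :: "real mat"
  assumes "A \<in> carrier_mat n n" "transpose_mat A = A" "char_poly A = (\<Prod>e\<leftarrow>es. [:- e, 1:])"
  shows "\<exists>U. U \<in> carrier_mat n n \<and> transpose_mat U * U = 1\<^sub>m n \<and> transpose_mat U * A * U = diagm es"
  using assms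
proof (induct es arbitrary: n A)
  case Nil
  then have n: "n = 0" using degree_monic_char_poly[of A n] by auto
  show ?case using Nil n by (intro exI[of _ "1\<^sub>m 0"]) (auto intro!: eq_matI simp: diagm_def)
next
  case (Cons e es n A)
  have A: "A \<in> carrier_mat n n" and sym: "transpose_mat A = A" using Cons by auto
  have cp: "char_poly A = [:-e,1:] * (\<Prod>e\<leftarrow>es. [:- e, 1:])" using Cons by simp
  have deg: "n = Suc (length es)" 
     using degree_monic_char_poly[OF A] degree_linear_factors[of uminus "e#es"] Cons(4) by auto
  have ev: "eigenvalue A e" unfolding eigenvalue_root_char_poly[OF A] cp by simp
  define v where "v = find_eigenvector A e"
  from find_eigenvector[OF A ev] have "eigenvector A v e" unfolding v_def .
  then have v: "v \<in> carrier_vec n" and v0: "v \<noteq> 0\<^sub>v n" and Av: "A *\<^sub>v v = e \<cdot>\<^sub>v v"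
    using A unfolding eigenvector_def by auto
  interpret cof_vec_space n "TYPE(real)" .
  define b where "b = basis_completion v"
  from basis_completion[OF v v0, folded b_def]
  have span_b: "span (set b) = carrier_vec n" and dist_b: "distinct b" 
    and indep: "\<not> lin_dep (set b)" and b: "set b \<subseteq> carrier_vec n" and hdb: "hd b = v" 
    and len_b: "length b = n" by auto
  from hdb len_b deg obtain vs where bv: "b = v # vs" by (cases b, auto)
  define ws where "ws = gram_schmidt n b"
  from gram_schmidt_result[OF b dist_b indep refl, folded ws_def]
  have wsc: "set ws \<subseteq> carrier_vec n" and orth: "corthogonal ws" and lws: "length ws = n"
    by (auto simp: len_b)
  from gram_schmidt_hd[OF v, of vs, folded bv] have hdws: "hd ws = v" unfolding ws_def .
  have ws0: "ws ! 0 = v" using hdws lws deg by (cases ws, auto)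
  have wsi: "\<And>i. i < n \<Longrightarrow> ws ! i \<in> carrier_vec n" using wsc lws by auto
  have wsdot: "\<And>i j. i < n \<Longrightarrow> j < n \<Longrightarrow> ws!i \<bullet> ws!j = 0 \<longleftrightarrow> i \<noteq> j"
    using corthogonalD[OF orth] lws by auto
  have wpos: "\<And>i. i < n \<Longrightarrow> ws!i \<bullet> ws!i > 0"
    using wsdot real_dot_self_nonneg by (metis order_le_less)
  define nm where "nm = (\<lambda>w::real vec. (1 / sqrt (w \<bullet> w)) \<cdot>\<^sub>v w)"
  define ws' where "ws' = map nm ws"
  define W where "W = mat_of_cols n ws'"
  have ws'i: "\<And>i. i < n \<Longrightarrow> ws'!i = nm (ws!i)" unfolding ws'_def using lws by auto
  have ws'c: "\<And>i. i < n \<Longrightarrow> ws'!i \<in> carrier_vec n" using ws'i wsi unfolding nm_def by auto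
  have ws'dot: "\<And>i j. i < n \<Longrightarrow> j < n \<Longrightarrow> ws'!i \<bullet> ws'!j = (if i = j then 1 else 0)"
  proof -
    fix i j assume i: "i < n" and j: "j < n"
    have "ws'!i \<bullet> ws'!j = (1 / sqrt (ws!i \<bullet> ws!i)) * (1 / sqrt (ws!j \<bullet> ws!j)) * (ws!i \<bullet> ws!j)"
      unfolding ws'i[OF i] ws'i[OF j] nm_def using wsi[OF i] wsi[OF j] by simp
    then show "ws'!i \<bullet> ws'!j = (if i = j then 1 else 0)"
      using wsdot[OF i j] wpos[OF i] by (auto simp: field_simps)
  qed
  have W: "W \<in> carrier_mat n n" unfolding W_def ws'_def using lws by auto
  have colW: "\<And>i. i < n \<Longrightarrow> col W i = ws'!i" unfolding W_def using ws'c lws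
    by (auto simp: ws'_def)
  have WtW: "transpose_mat W * W = 1\<^sub>m n"
    by (rule eq_matI) (insert W, auto simp: colW ws'dot)
  have WWt: "W * transpose_mat W = 1\<^sub>m n" 
    using mat_mult_left_right_inverse[OF _ W WtW] W by auto
  define A' where "A' = transpose_mat W * A * W"
  have A'c: "A' \<in> carrier_mat n n" unfolding A'_def using A W by auto
  have symA': "transpose_mat A' = A'"
  proof -
    have "transpose_mat A' = transpose_mat W * transpose_mat (transpose_mat W * A)"
      unfolding A'_def by (rule transpose_mult[of _ n n], insert A W, auto)
    also have "transpose_mat (transpose_mat W * A) = transpose_mat A * W"
      by (subst transpose_mult[of _ n n], insert A W, auto)
    finally show ?thesis unfolding sym A'_def using A W by (simp add: assoc_mult_mat[of _ n n _ n _ n])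
  qed
  have A'sym: "\<And>i j. i < n \<Longrightarrow> j < n \<Longrightarrow> A' $$ (i,j) = A' $$ (j,i)"
    using symA' A'c by (metis carrier_matD index_transpose_mat(1))
  have n0: "0 < n" using deg by auto
  have Anm: "A *\<^sub>v (ws'!0) = e \<cdot>\<^sub>v (ws'!0)"
    using ws'i[OF n0] ws0 Av v A unfolding nm_def
    by (auto simp: mult_mat_vec[of _ n n] smult_smult_assoc mult.commute)
  have A'col: "\<And>i. i < n \<Longrightarrow> A' $$ (i,0) = (if i = 0 then e else 0)"
  proof -
    fix i assume i: "i < n"
    have "A' = transpose_mat W * (A * W)" unfolding A'_def using A W by auto
    then have "A' $$ (i,0) = col W i \<bullet> (A *\<^sub>v col W 0)" using i n0 A W by (simp add: mult_mat_vec_def)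
    also have "\<dots> = e * (ws'!i \<bullet> ws'!0)" using colW[OF i] colW[OF n0] Anm ws'c[OF i] ws'c[OF n0] by simp
    finally show "A' $$ (i,0) = (if i = 0 then e else 0)" using ws'dot[OF i n0] by simp
  qed
  define A3 where "A3 = mat (n-1) (n-1) (\<lambda>(i,j). A' $$ (Suc i, Suc j))"
  have A3c: "A3 \<in> carrier_mat (n-1) (n-1)" unfolding A3_def by auto
  have A'block: "A' = four_block_mat (mat 1 1 (\<lambda>_. e)) (0\<^sub>m 1 (n-1)) (0\<^sub>m (n-1) 1) A3"
    by (rule eq_matI) (insert A'c n0, auto simp: A3_def A'col A'sym[of 0])
  have symA3: "transpose_mat A3 = A3" 
    by (rule eq_matI) (insert A'c, auto simp: A3_def A'sym)
  have "similar_mat A' A" unfolding similar_mat_def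
    by (rule exI[of _ "transpose_mat W"], rule exI[of _ W], rule similar_mat_witI[of _ _ n])
       (insert WtW WWt A W A'c, auto simp: A'_def)
  then have "char_poly A' = char_poly A" by (rule char_poly_similar)
  moreover have "char_poly A' = char_poly (mat 1 1 (\<lambda>_. e)) * char_poly A3"
    unfolding A'block by (rule char_poly_four_block_zeros_col, insert A3c, auto)
  moreover have "char_poly (mat 1 1 (\<lambda>_. e)) = [:-e, 1:]"
    by (simp add: char_poly_defs det_def sign_def)
  ultimately have cp3: "char_poly A3 = (\<Prod>e\<leftarrow>es. [:- e, 1:])" using cp
    by (metis mult_cancel_left pCons_eq_0_iff zero_neq_one)
  from Cons(1)[OF A3c symA3 cp3] obtain U3 where U3c: "U3 \<in> carrier_mat (n-1) (n-1)"
    and U3o: "transpose_mat U3 * U3 = 1\<^sub>m (n-1)" and U3d: "transpose_mat U3 * A3 * U3 = diagm es" by auto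
  define P where "P = four_block_mat (1\<^sub>m 1) (0\<^sub>m 1 (n-1)) (0\<^sub>m (n-1) 1) U3"
  have Pc: "P \<in> carrier_mat n n" unfolding P_def using U3c n0 by auto
  have Pt: "transpose_mat P = four_block_mat (1\<^sub>m 1) (0\<^sub>m 1 (n-1)) (0\<^sub>m (n-1) 1) (transpose_mat U3)"
    unfolding P_def by (subst transpose_four_block_mat, insert U3c, auto)
  have PtP: "transpose_mat P * P = 1\<^sub>m n"
    unfolding Pt unfolding P_def
    by (subst mult_four_block_mat[of _ 1 1 _ "n-1" _ "n-1" _ _ 1 _ "n-1"], insert U3c, auto simp: U3o
        intro!: eq_matI) (insert n0, auto)
  have PtA'P: "transpose_mat P * A' * P = diagm (e # es)"
  proof -
    have "transpose_mat P * A' = four_block_mat (mat 1 1 (\<lambda>_. e)) (0\<^sub>m 1 (n-1)) (0\<^sub>m (n-1) 1) (transpose_mat U3 * A3)"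
      unfolding Pt A'block
      by (subst mult_four_block_mat[of _ 1 1 _ "n-1" _ "n-1" _ _ 1 _ "n-1"], insert U3c A3c, auto
        intro!: eq_matI)
    then have "transpose_mat P * A' * P = four_block_mat (mat 1 1 (\<lambda>_. e)) (0\<^sub>m 1 (n-1)) (0\<^sub>m (n-1) 1) (transpose_mat U3 * A3 * U3)"
      unfolding P_def
      by (simp, subst mult_four_block_mat[of _ 1 1 _ "n-1" _ "n-1" _ _ 1 _ "n-1"], insert U3c A3c, auto
        intro!: eq_matI)
    also have "\<dots> = diagm (e # es)" unfolding U3d
      by (rule eq_matI) (insert deg, auto simp: diagm_def)
    finally show ?thesis .
  qed
  define U where "U = W * P"
  show ?case
  proof (intro exI[of _ U] conjI)
    show Uc: "U \<in> carrier_mat n n" unfolding U_def using W Pc by auto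
    have Ut: "transpose_mat U = transpose_mat P * transpose_mat W" unfolding U_def
      by (rule transpose_mult[of _ n n], insert W Pc, auto)
    have "transpose_mat U * U = (transpose_mat P * transpose_mat W) * (W * P)"
      unfolding Ut by (simp add: U_def)
    also have "\<dots> = transpose_mat P * (transpose_mat W * W) * P"
      using W Pc by (simp add: assoc_mult_mat[of _ n n _ n _ n])
    finally have "transpose_mat U * U = transpose_mat P * (transpose_mat W * W) * P" .
    then show "transpose_mat U * U = 1\<^sub>m n" using WtW PtP Pc by simp
    have "transpose_mat U * A * U = (transpose_mat P * transpose_mat W) * A * (W * P)"
      unfolding Ut by (simp add: U_def)
    also have "\<dots> = transpose_mat P * A' * P"
      unfolding A'_def using W Pc A by (simp add: assoc_mult_mat[of _ n n _ n _ n])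
    finally have "transpose_mat U * A * U = transpose_mat P * A' * P" .
    then show "transpose_mat U * A * U = diagm (e # es)" using PtA'P by simp
  qed
qed

lemma sym_eigen_real:
  fixes A :: "real mat" and a :: complex
  assumes A: "A \<in> carrier_mat n n" and sym: "transpose_mat A = A"
    and ev: "eigenvalue (map_mat of_real A) a"
  shows "Im a = 0"
proof -
  let ?B = "map_mat complex_of_real A"
  from ev obtain z where z: "eigenvector ?B z a" unfolding eigenvalue_def by auto
  then have zc: "z \<in> carrier_vec n" and z0: "z \<noteq> 0\<^sub>v n" and Bz: "?B *\<^sub>v z = a \<cdot>\<^sub>v z"
    using A unfolding eigenvector_def by auto
  have Aij: "\<And>i j. i < n \<Longrightarrow> j < n \<Longrightarrow> A $$ (i,j) = A $$ (j,i)"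
    using sym A by (metis carrier_matD index_transpose_mat(1))
  define s where "s = (\<Sum>i<n. \<Sum>j<n. of_real (A $$ (i,j)) * (z $ j * cnj (z $ i)))"
  have s1: "(?B *\<^sub>v z) \<bullet>c z = s"
    unfolding s_def scalar_prod_def using A zc
    by (auto simp: scalar_prod_def sum_distrib_right lessThan_atLeast0 mult.assoc intro!: sum.cong)
  have "cnj s = (\<Sum>i<n. \<Sum>j<n. of_real (A $$ (i,j)) * (cnj (z $ j) * z $ i))"
    unfolding s_def by simp
  also have "\<dots> = (\<Sum>j<n. \<Sum>i<n. of_real (A $$ (i,j)) * (cnj (z $ j) * z $ i))"
    by (rule sum.swap)
  also have "\<dots> = s" unfolding s_def
    by (intro sum.cong refl, simp add: Aij mult.commute)
  finally have "cnj s = s" .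
  then have "Im (cnj s) = Im s" by simp
  then have Ims: "Im s = 0" by simp
  define c where "c = z \<bullet>c z"
  have cpos: "c > 0" unfolding c_def using zc z0 by simp
  then have Imc: "Im c = 0" and Rec: "Re c > 0" by (auto simp: less_complex_def)
  have "s = a * c" unfolding s1[symmetric] Bz c_def using zc by simp
  then have "Im s = Im a * Re c" using Imc by simp
  then show ?thesis using Ims Rec by simp
qed

lemma map_poly_of_real_lin:
  "map_poly (of_real::real\<Rightarrow>complex) ([:-e,1:] * p) = [:-of_real e,1:] * map_poly of_real p"
proof -
  interpret h: map_poly_comm_ring_hom "of_real :: real \<Rightarrow> complex" ..
  show ?thesis by (simp only: h.hom_mult) simp
qed

lemma sym_real_splits:
  fixes A :: "real mat"
  assumes A: "A \<in> carrier_mat n n" and sym: "transpose_mat A = A"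
  shows "\<exists>es. char_poly A = (\<Prod>e\<leftarrow>es. [:- e, 1:])"
proof -
  let ?B = "map_mat complex_of_real A"
  have B: "?B \<in> carrier_mat n n" using A by auto
  from char_poly_factorized[OF B] obtain as where cpB: "char_poly ?B = (\<Prod>a\<leftarrow>as. [:- a, 1:])" by auto
  have real: "\<And>a. a \<in> set as \<Longrightarrow> a = of_real (Re a)"
  proof -
    fix a assume a: "a \<in> set as"
    have "poly (char_poly ?B) a = 0" unfolding cpB using a
      by (induct as) (auto simp: poly_prod_list)
    then have "eigenvalue ?B a" using eigenvalue_root_char_poly[OF B] by auto
    then have "Im a = 0" using sym_eigen_real[OF A sym] by auto
    then show "a = of_real (Re a)" by (simp add: complex_eq_iff)
  qed
  define es where "es = map Re as"
  have "(\<Prod>a\<leftarrow>as. [:- a, 1:]) = (\<Prod>e\<leftarrow>es. [:- of_real e, 1:])"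
    unfolding es_def using real by (induct as) auto
  also have "\<dots> = map_poly of_real (\<Prod>e\<leftarrow>es. [:- e, 1:])"
  proof (induct es)
    case (Cons e es)
    then show ?case by (simp only: list.map prod_list.Cons map_poly_of_real_lin)
  qed simp
  finally have chain: "(\<Prod>a\<leftarrow>as. [:- a, 1:]) = map_poly of_real (\<Prod>e\<leftarrow>es. [:- e, 1:])" .
  have "map_poly (of_real :: real \<Rightarrow> complex) (char_poly A) = map_poly of_real (\<Prod>e\<leftarrow>es. [:- e, 1:])"
  proof -
    have "char_poly ?B = map_poly (of_real::real\<Rightarrow>complex) (char_poly A)"
      by (rule of_real_hom.char_poly_hom[OF A])
    then show ?thesis using cpB chain by simp
  qed
  note eq = this
  interpret h: map_poly_inj_comm_ring_hom "of_real :: real \<Rightarrow> complex" ..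
  from eq show ?thesis by auto
qed

lemma order_lin_prod: "Polynomial.order a (\<Prod>e\<leftarrow>ls. [:-e,1:]) = count (mset ls) (a::real)"
proof (induct ls)
  case Nil
  then show ?case by (simp add: order_0I)
next
  case (Cons e ls)
  have nz: "(\<Prod>e\<leftarrow>ls. [:-e,1:]) \<noteq> (0::real poly)"
    by (auto simp: prod_list_zero_iff)
  have "Polynomial.order a ([:-e,1:] * (\<Prod>e\<leftarrow>ls. [:-e,1:])) = Polynomial.order a [:-e,1:] + Polynomial.order a (\<Prod>e\<leftarrow>ls. [:-e,1:])"
  proof (rule order_mult)
    show "[:-e,1:] * (\<Prod>e\<leftarrow>ls. [:-e,1:]) \<noteq> 0" using nz by (metis mult_eq_0_iff pCons_eq_0_iff one_neq_zero)
  qed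
  moreover have "Polynomial.order a [:-e,1:] = (if a = e then 1 else 0)"
  proof (cases "a = e")
    case True
    then show ?thesis using order_power_n_n[of a 1] by simp
  next
    case False
    then show ?thesis by (simp add: order_0I)
  qed
  ultimately show ?case using Cons by simp
qed

lemma eigvals_eq:
  assumes "sorted_wrt (\<ge>) ls" "char_poly M = (\<Prod>e\<leftarrow>ls. [:-e,1:])"
  shows "eigvals M = ls"
  unfolding eigvals_def
proof (rule the_equality)
  show "sorted_wrt (\<ge>) ls \<and> char_poly M = (\<Prod>e\<leftarrow>ls. [:-e,1:])" using assms by auto
  fix ls' assume *: "sorted_wrt (\<ge>) ls' \<and> char_poly M = (\<Prod>a\<leftarrow>ls'. [:-a,1:])"
  then have "(\<Prod>a\<leftarrow>ls'. [:-a,1:]) = (\<Prod>e\<leftarrow>ls. [:-e,1:])" using assms by simp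
  then have "mset ls' = mset ls"
    by (intro multiset_eqI) (metis order_lin_prod)
  moreover have "sorted (rev ls')" "sorted (rev ls)" using * assms(1) by (auto simp: sorted_wrt_rev)
  ultimately have "sort (rev ls) = rev ls'" "sort (rev ls) = rev ls"
    by (auto intro!: properties_for_sort)
  then show "ls' = ls" by simp
qed

lemma spectral_sorted:
  fixes A :: "real mat"
  assumes A: "A \<in> carrier_mat n n" and sym: "transpose_mat A = A"
  shows "\<exists>U. U \<in> carrier_mat n n \<and> transpose_mat U * U = 1\<^sub>m n \<and> transpose_mat U * A * U = diagm (eigvals A)
     \<and> length (eigvals A) = n \<and> sorted_wrt (\<ge>) (eigvals A)"
proof -
  obtain es where es: "char_poly A = (\<Prod>e\<leftarrow>es. [:- e, 1:])" using sym_real_splits[OF A sym] by auto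
  define ls where "ls = rev (sort es)"
  have "mset ls = mset es" unfolding ls_def by simp
  then have cp: "char_poly A = (\<Prod>e\<leftarrow>ls. [:- e, 1:])" unfolding es
    by (metis mset_map prod_mset_prod_list)
  have sorted: "sorted_wrt (\<ge>) ls" unfolding ls_def by (simp add: sorted_wrt_rev)
  have ev: "eigvals A = ls" by (rule eigvals_eq[OF sorted cp])
  have len: "length ls = n"
     using degree_monic_char_poly[OF A] degree_linear_factors[of uminus ls] cp by auto
  from spectral_aux[OF A sym cp] len sorted ev show ?thesis by auto
qed

definition ip :: "nat \<Rightarrow> (nat \<Rightarrow> real) \<Rightarrow> (nat \<Rightarrow> real) \<Rightarrow> real" where
  "ip n x y = (\<Sum>a<n. x a * y a)"

lemma spectral_fun:
  fixes A :: "real mat"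
  assumes A: "A \<in> carrier_mat n n" and sym: "transpose_mat A = A"
  shows "\<exists>u. (\<forall>j<n. \<forall>l<n. ip n (u j) (u l) = (if j = l then 1 else 0))
     \<and> (\<forall>a<n. \<forall>b<n. (\<Sum>j<n. u j a * u j b) = (if a = b then 1 else 0))
     \<and> (\<forall>a<n. \<forall>b<n. A $$ (a,b) = (\<Sum>j<n. eigvals A ! j * u j a * u j b))"
proof -
  obtain U where Uc: "U \<in> carrier_mat n n" and UtU: "transpose_mat U * U = 1\<^sub>m n"
    and D: "transpose_mat U * A * U = diagm (eigvals A)" and len: "length (eigvals A) = n"
    using spectral_sorted[OF A sym] by auto
  define ls where "ls = eigvals A"
  have UUt: "U * transpose_mat U = 1\<^sub>m n"
    using mat_mult_left_right_inverse[OF _ Uc UtU] Uc by auto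
  define u where "u = (\<lambda>j a. U $$ (a,j))"
  have 1: "\<forall>j<n. \<forall>l<n. ip n (u j) (u l) = (if j = l then 1 else 0)"
  proof (intro allI impI)
    fix j l assume j: "j < n" and l: "l < n"
    have "(transpose_mat U * U) $$ (j,l) = ip n (u j) (u l)"
      using Uc j l by (simp add: scalar_prod_def ip_def u_def lessThan_atLeast0)
    then show "ip n (u j) (u l) = (if j = l then 1 else 0)" using UtU j l by simp
  qed
  have 2: "\<forall>a<n. \<forall>b<n. (\<Sum>j<n. u j a * u j b) = (if a = b then 1 else 0)"
  proof (intro allI impI)
    fix a b assume a: "a < n" and b: "b < n"
    have "(U * transpose_mat U) $$ (a,b) = (\<Sum>j<n. u j a * u j b)"
      using Uc a b by (simp add: scalar_prod_def u_def lessThan_atLeast0)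
    then show "(\<Sum>j<n. u j a * u j b) = (if a = b then 1 else 0)" using UUt a b by simp
  qed
  have AUDU: "A = U * diagm ls * transpose_mat U"
  proof -
    have "A = (U * transpose_mat U) * A * (U * transpose_mat U)" using UUt A by simp
    also have "\<dots> = U * (transpose_mat U * A * U) * transpose_mat U"
      using Uc A by (simp add: assoc_mult_mat[of _ n n _ n _ n])
    finally show ?thesis using D ls_def by simp
  qed
  have dc: "diagm ls \<in> carrier_mat n n" using len ls_def by (simp add: diagm_def)
  have 3: "\<forall>a<n. \<forall>b<n. A $$ (a,b) = (\<Sum>j<n. ls ! j * u j a * u j b)"
  proof (intro allI impI)
    fix a b assume a: "a < n" and b: "b < n"
    have UD: "\<And>j. j < n \<Longrightarrow> (U * diagm ls) $$ (a,j) = U $$ (a,j) * ls ! j"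
    proof -
      fix j assume j: "j < n"
      have "(U * diagm ls) $$ (a,j) = (\<Sum>k = 0..<n. U $$ (a,k) * (if k = j then ls ! k else 0))"
        using Uc dc a j len unfolding ls_def by (simp add: scalar_prod_def diagm_def)
      also have "\<dots> = U $$ (a,j) * ls ! j"
        by (simp add: if_distrib[of "\<lambda>x. _ * x"] sum.delta' j cong: if_cong)
      finally show "(U * diagm ls) $$ (a,j) = U $$ (a,j) * ls ! j" .
    qed
    have "A $$ (a,b) = (\<Sum>j = 0..<n. (U * diagm ls) $$ (a,j) * U $$ (b,j))"
      unfolding AUDU using Uc dc a b by (simp add: scalar_prod_def del: assoc_mult_mat)
    also have "\<dots> = (\<Sum>j<n. ls ! j * u j a * u j b)"
      by (simp add: UD lessThan_atLeast0 u_def mult_ac)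
    finally show "A $$ (a,b) = (\<Sum>j<n. ls ! j * u j a * u j b)" .
  qed
  show ?thesis using 1 2 3 ls_def by blast
qed

lemma ip_comm: "ip n x y = ip n y x" unfolding ip_def by (simp add: mult.commute)

lemma ip_self_nonneg: "ip n x x \<ge> 0" unfolding ip_def by (auto intro: sum_nonneg)

lemma bessel:
  fixes N :: nat
  assumes orth: "\<And>j l. j < N \<Longrightarrow> l < N \<Longrightarrow> j \<noteq> l \<Longrightarrow> ip n (w j) (w l) = 0"
  shows "(\<Sum>j<N. (ip n (w j) x)^2 / ip n (w j) (w j)) \<le> ip n x x"
proof -
  define c where "c = (\<lambda>j. ip n (w j) x / ip n (w j) (w j))"
  define s where "s = (\<lambda>a. \<Sum>j<N. c j * w j a)"
  define T where "T = (\<Sum>j<N. (ip n (w j) x)^2 / ip n (w j) (w j))"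
  have S1: "(\<Sum>a<n. x a * s a) = T"
  proof -
    have "(\<Sum>a<n. x a * s a) = (\<Sum>a<n. \<Sum>j<N. c j * (w j a * x a))"
      by (simp add: s_def sum_distrib_left mult_ac)
    also have "\<dots> = (\<Sum>j<N. \<Sum>a<n. c j * (w j a * x a))" by (rule sum.swap)
    also have "\<dots> = (\<Sum>j<N. c j * ip n (w j) x)" by (simp add: ip_def sum_distrib_left)
    also have "\<dots> = T" unfolding T_def c_def by (simp add: power2_eq_square)
    finally show ?thesis .
  qed
  have S2: "(\<Sum>a<n. s a * s a) = T"
  proof -
    have "(\<Sum>a<n. s a * s a) = (\<Sum>a<n. \<Sum>j<N. \<Sum>l<N. c j * c l * (w j a * w l a))"
      by (simp add: s_def sum_product mult_ac)
    also have "\<dots> = (\<Sum>j<N. \<Sum>a<n. \<Sum>l<N. c j * c l * (w j a * w l a))" by (rule sum.swap)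
    also have "\<dots> = (\<Sum>j<N. \<Sum>l<N. \<Sum>a<n. c j * c l * (w j a * w l a))"
      by (rule sum.cong[OF refl], rule sum.swap)
    also have "\<dots> = (\<Sum>j<N. \<Sum>l<N. c j * c l * ip n (w j) (w l))"
      by (simp add: ip_def sum_distrib_left)
    also have "\<dots> = (\<Sum>j<N. \<Sum>l<N. if l = j then c j * c j * ip n (w j) (w j) else 0)"
      by (rule sum.cong[OF refl], rule sum.cong[OF refl], auto simp: orth)
    also have "\<dots> = (\<Sum>j<N. c j * c j * ip n (w j) (w j))" by (intro sum.cong refl) simp
    also have "\<dots> = T" unfolding T_def c_def
      by (rule sum.cong[OF refl]) (auto simp: power2_eq_square)
    finally show ?thesis .
  qed
  have "0 \<le> (\<Sum>a<n. (x a - s a) * (x a - s a))" by (auto intro: sum_nonneg)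
  also have "\<dots> = (\<Sum>a<n. x a * x a) - 2 * (\<Sum>a<n. x a * s a) + (\<Sum>a<n. s a * s a)"
    by (simp add: algebra_simps sum.distrib sum_subtractf sum_distrib_left)
  finally show ?thesis using S1 S2 unfolding T_def ip_def by simp
qed

lemma sum_list_take_nth: "k \<le> length ls \<Longrightarrow> sum_list (take k ls) = (\<Sum>j<k. ls ! j)"
  by (simp add: sum_list_sum_nth lessThan_atLeast0 min_absorb1)

lemma sum_if_less: "k \<le> (N::nat) \<Longrightarrow> (\<Sum>j<N. if j < k then f j else 0) = (\<Sum>j<k. (f j :: real))"
proof -
  assume kN: "k \<le> N"
  have "(\<Sum>j<N. if j < k then f j else 0) = (\<Sum>j\<in>{j\<in>{..<N}. j < k}. f j)"
    by (rule sum.inter_filter[symmetric]) simp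
  also have "{j\<in>{..<N}. j < k} = {..<k}" using kN by auto
  finally show ?thesis .
qed

lemma rearr:
  fixes ls :: "real list" and t :: "nat \<Rightarrow> real"
  assumes sorted: "sorted_wrt (\<ge>) ls" and len: "length ls = N"
   and t01: "\<And>j. j < N \<Longrightarrow> 0 \<le> t j \<and> t j \<le> 1"
   and tsum: "(\<Sum>j<N. t j) \<le> real k"
   and cond: "(\<forall>j<N. 0 \<le> ls!j) \<or> (\<Sum>j<N. t j) = real k"
  shows "(\<Sum>j<N. ls!j * t j) \<le> sum_list (take k ls)"
proof -
  have mono: "\<And>i j. i \<le> j \<Longrightarrow> j < N \<Longrightarrow> ls!j \<le> ls!i"
    using sorted len by (metis le_less order_refl sorted_wrt_nth_less)
  show ?thesis
  proof (cases "k < N")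
    case True
    define c where "c = ls ! k"
    have tk: "sum_list (take k ls) = (\<Sum>j<N. if j < k then ls!j else 0)"
      using True len by (simp add: sum_list_take_nth sum_if_less)
    have kk: "real k = (\<Sum>j<N. if j < k then 1 else 0)"
      using True by (simp add: sum_if_less)
    have "(\<Sum>j<N. ls!j * t j) - sum_list (take k ls) = (\<Sum>j<N. ls!j * t j - (if j < k then ls!j else 0))"
      unfolding tk by (simp add: sum_subtractf)
    also have "\<dots> \<le> (\<Sum>j<N. c * (t j - (if j < k then 1 else 0)))"
    proof (rule sum_mono)
      fix j assume j: "j \<in> {..<N}"
      show "ls!j * t j - (if j < k then ls!j else 0) \<le> c * (t j - (if j < k then 1 else 0))"
      proof (cases "j < k")
        case True
        then have "c \<le> ls!j" unfolding c_def using mono \<open>k < N\<close> by auto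
        moreover have "t j - 1 \<le> 0" using t01 j by auto
        ultimately have "ls!j * (t j - 1) \<le> c * (t j - 1)" by (rule mult_right_mono_neg)
        then show ?thesis using True by (simp add: algebra_simps)
      next
        case False
        then have "ls!j \<le> c" unfolding c_def using mono j by auto
        moreover have "0 \<le> t j" using t01 j by auto
        ultimately have "ls!j * t j \<le> c * t j" by (rule mult_right_mono)
        then show ?thesis using False by simp
      qed
    qed
    also have "\<dots> = c * ((\<Sum>j<N. t j) - real k)"
      unfolding kk by (simp add: sum_distrib_left sum_subtractf right_diff_distrib)
    also have "\<dots> \<le> 0"
    proof (cases "(\<Sum>j<N. t j) = real k")
      case False
      then have "0 \<le> c" using cond True unfolding c_def by auto
      then show ?thesis using tsum by (simp add: mult_nonneg_nonpos)
    qed simp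
    finally show ?thesis by simp
  next
    case False
    then have tk: "sum_list (take k ls) = (\<Sum>j<N. ls!j)" using len by (simp add: sum_list_sum_nth lessThan_atLeast0)
    show ?thesis
    proof (cases "\<forall>j<N. 0 \<le> ls!j")
      case True
      have "(\<Sum>j<N. ls!j * t j) \<le> (\<Sum>j<N. ls!j)"
      proof (rule sum_mono)
        fix j assume "j \<in> {..<N}"
        then show "ls!j * t j \<le> ls!j" using True t01 by (simp add: mult_left_le)
      qed
      then show ?thesis using tk by simp
    next
      case nn: False
      then have eq: "(\<Sum>j<N. t j) = real k" using cond by auto
      have "(\<Sum>j<N. 1 - t j) = real N - real k" using eq by (simp add: sum_subtractf)
      moreover have "(\<Sum>j<N. 1 - t j) \<ge> 0" using t01 by (auto intro: sum_nonneg)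
      ultimately have "(\<Sum>j<N. 1 - t j) = 0" using False by simp
      then have "\<forall>j\<in>{..<N}. 1 - t j = 0" using t01 by (subst sum_nonneg_eq_0_iff[symmetric]) auto
      then have "(\<Sum>j<N. ls!j * t j) = (\<Sum>j<N. ls!j)" by (intro sum.cong) auto
      then show ?thesis using tk by simp
    qed
  qed
qed

lemma quad_expand:
  fixes N :: nat
  assumes K: "\<forall>a<n. \<forall>b<n. K a b = (\<Sum>j<N. g j * u j a * u j b)"
  shows "(\<Sum>a<n. \<Sum>b<n. K a b * x a * x b) = (\<Sum>j<N. g j * (ip n (u j) x)^2)"
proof -
  have "(\<Sum>a<n. \<Sum>b<n. K a b * x a * x b) = (\<Sum>a<n. \<Sum>b<n. \<Sum>j<N. g j * (u j a * x a) * (u j b * x b))"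
    by (intro sum.cong refl) (simp add: K sum_distrib_left sum_distrib_right mult_ac)
  also have "\<dots> = (\<Sum>a<n. \<Sum>j<N. \<Sum>b<n. g j * (u j a * x a) * (u j b * x b))"
    by (rule sum.cong[OF refl], rule sum.swap)
  also have "\<dots> = (\<Sum>j<N. \<Sum>a<n. \<Sum>b<n. g j * (u j a * x a) * (u j b * x b))"
    by (rule sum.swap)
  also have "\<dots> = (\<Sum>j<N. g j * (ip n (u j) x)^2)"
    by (intro sum.cong refl) (simp add: ip_def power2_eq_square sum_distrib_left sum_product mult_ac)
  finally show ?thesis .
qed

lemma parseval:
  assumes compl: "\<forall>a<n. \<forall>b<n. (\<Sum>j<n. u j a * u j b) = (if a = b then 1 else 0)"
  shows "ip n x x = (\<Sum>j<n. (ip n (u j) x)^2)"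
proof -
  have "(\<Sum>a<n. \<Sum>b<n. (if a = b then 1 else 0) * x a * x b) = (\<Sum>j<n. 1 * (ip n (u j) x)^2)"
    by (rule quad_expand) (simp add: compl)
  moreover have "(\<Sum>a<n. \<Sum>b<n. (if a = b then 1 else 0) * x a * x b) = ip n x x"
    unfolding ip_def by (simp add: if_distrib[of "\<lambda>y. y * _"] cong: if_cong)
  ultimately show ?thesis by simp
qed

definition qf :: "nat \<Rightarrow> real mat \<Rightarrow> (nat \<Rightarrow> real) \<Rightarrow> real" where
  "qf n A x = (\<Sum>a<n. \<Sum>b<n. A $$ (a,b) * x a * x b)"

lemma qf_dec:
  assumes dec: "\<forall>a<n. \<forall>b<n. A $$ (a,b) = (\<Sum>j<n. ls ! j * u j a * u j b)"
  shows "qf n A x = (\<Sum>j<n. ls ! j * (ip n (u j) x)^2)"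
  unfolding qf_def by (rule quad_expand[OF dec])

lemma qf_eig:
  assumes dec: "\<forall>a<n. \<forall>b<n. A $$ (a,b) = (\<Sum>j<n. ls ! j * u j a * u j b)"
    and orth: "\<forall>j<n. \<forall>l<n. ip n (u j) (u l) = (if j = l then 1 else 0)"
    and i: "i < n"
  shows "qf n A (u i) = ls ! i"
proof -
  have "qf n A (u i) = (\<Sum>j<n. ls ! j * (ip n (u j) (u i))^2)" by (rule qf_dec[OF dec])
  also have "\<dots> = (\<Sum>j<n. if j = i then ls ! j else 0)"
    by (intro sum.cong refl) (simp add: orth i)
  also have "\<dots> = ls ! i" using i by simp
  finally show ?thesis .
qed

lemma KF_upper:
  assumes dec: "\<forall>a<n. \<forall>b<n. A $$ (a,b) = (\<Sum>j<n. ls ! j * u j a * u j b)"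
    and orth: "\<forall>j<n. \<forall>l<n. ip n (u j) (u l) = (if j = l then 1 else 0)"
    and compl: "\<forall>a<n. \<forall>b<n. (\<Sum>j<n. u j a * u j b) = (if a = b then 1 else 0)"
    and sorted: "sorted_wrt (\<ge>) ls" and len: "length ls = n"
    and xs: "\<forall>i<k. \<forall>i'<k. ip n (xs i) (xs i') = (if i = i' then 1 else 0)"
  shows "(\<Sum>i<k. qf n A (xs i)) \<le> sum_list (take k ls)"
proof -
  define t where "t = (\<lambda>j. \<Sum>i<k. (ip n (u j) (xs i))^2)"
  have "(\<Sum>i<k. qf n A (xs i)) = (\<Sum>i<k. \<Sum>j<n. ls ! j * (ip n (u j) (xs i))^2)"
    by (intro sum.cong refl) (rule qf_dec[OF dec])
  also have "\<dots> = (\<Sum>j<n. ls ! j * t j)"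
    by (subst sum.swap) (simp add: t_def sum_distrib_left)
  finally have eq: "(\<Sum>i<k. qf n A (xs i)) = (\<Sum>j<n. ls ! j * t j)" .
  have t01: "\<And>j. j < n \<Longrightarrow> 0 \<le> t j \<and> t j \<le> 1"
  proof
    fix j assume j: "j < n"
    show "0 \<le> t j" unfolding t_def by (auto intro: sum_nonneg)
    have "(\<Sum>i<k. (ip n (xs i) (u j))^2 / ip n (xs i) (xs i)) \<le> ip n (u j) (u j)"
      by (rule bessel) (simp add: xs)
    then show "t j \<le> 1" using orth j xs unfolding t_def by (simp add: ip_comm)
  qed
  have tsum: "(\<Sum>j<n. t j) = real k"
  proof -
    have "(\<Sum>j<n. t j) = (\<Sum>i<k. \<Sum>j<n. (ip n (u j) (xs i))^2)"
      unfolding t_def by (rule sum.swap)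
    also have "\<dots> = (\<Sum>i<k. ip n (xs i) (xs i))"
      by (intro sum.cong refl) (simp add: parseval[OF compl])
    also have "\<dots> = real k" using xs by simp
    finally show ?thesis .
  qed
  show ?thesis unfolding eq by (rule rearr[OF sorted len t01]) (auto simp: tsum)
qed

lemma KF_attain:
  assumes dec: "\<forall>a<n. \<forall>b<n. A $$ (a,b) = (\<Sum>j<n. ls ! j * u j a * u j b)"
    and orth: "\<forall>j<n. \<forall>l<n. ip n (u j) (u l) = (if j = l then 1 else 0)"
    and len: "length ls = n" and k: "k \<le> n"
  shows "(\<Sum>i<k. qf n A (u i)) = sum_list (take k ls)"
  using k len by (simp add: sum_list_take_nth qf_eig[OF dec orth])

lemma spectral_S_k:
  fixes M :: "real mat"
  assumes "M \<in> carrier_mat n n" "transpose_mat M = M" "k \<le> n"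
  shows "\<exists>u. (\<forall>j<n. \<forall>l<n. ip n (u j) (u l) = (if j = l then 1 else 0)) \<and> S_k k M = (\<Sum>i<k. qf n M (u i))"
proof -
  obtain u where orth: "\<forall>j<n. \<forall>l<n. ip n (u j) (u l) = (if j = l then 1 else 0)"
     and dec: "\<forall>a<n. \<forall>b<n. M $$ (a,b) = (\<Sum>j<n. eigvals M ! j * u j a * u j b)"
    using spectral_fun[OF assms(1,2)] by blast
  have len: "length (eigvals M) = n" using spectral_sorted[OF assms(1,2)] by auto
  show ?thesis unfolding S_k_def
    by (rule exI[of _ u], rule conjI, fact orth, rule KF_attain[OF dec orth len assms(3), symmetric])
qed

lemma S_k_upper:
  fixes M :: "real mat"
  assumes "M \<in> carrier_mat n n" "transpose_mat M = M"
    and xs: "\<forall>i<k. \<forall>i'<k. ip n (xs i) (xs i') = (if i = i' then 1 else 0)"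
  shows "(\<Sum>i<k. qf n M (xs i)) \<le> S_k k M"
proof -
  obtain u where orth: "\<forall>j<n. \<forall>l<n. ip n (u j) (u l) = (if j = l then 1 else 0)"
     and compl: "\<forall>a<n. \<forall>b<n. (\<Sum>j<n. u j a * u j b) = (if a = b then 1 else 0)"
     and dec: "\<forall>a<n. \<forall>b<n. M $$ (a,b) = (\<Sum>j<n. eigvals M ! j * u j a * u j b)"
    using spectral_fun[OF assms(1,2)] by blast
  have len: "length (eigvals M) = n" and sorted: "sorted_wrt (\<ge>) (eigvals M)"
    using spectral_sorted[OF assms(1,2)] by auto
  show ?thesis using KF_upper[OF dec orth compl sorted len xs] unfolding S_k_def by auto
qed

lemma sum_indicator_card: "finite A \<Longrightarrow> (\<Sum>a\<in>A. if P a then 1 else (0::real)) = real (card {a\<in>A. P a})"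
  by (subst sum.inter_filter[symmetric]) auto

lemma edge_enum_bij: "finite E \<Longrightarrow> bij_betw (edge_enum E) {..<card E} E"
proof -
  assume "finite E"
  then obtain h where "bij_betw h {0..<card E} E" using ex_bij_betw_nat_finite by blast
  then have "\<exists>f. bij_betw f {..<card E} E" by (auto simp: atLeast0LessThan)
  then show ?thesis unfolding edge_enum_def by (rule someI_ex)
qed

definition inc :: "nat set set \<Rightarrow> nat \<Rightarrow> nat \<Rightarrow> real" where
  "inc E a e = (if a \<in> edge_enum E e then 1 else 0)"

definition dG :: "nat set set \<Rightarrow> nat \<Rightarrow> real" where
  "dG E a = (\<Sum>e<card E. inc E a e)"

context
  fixes n :: nat and E :: "nat set set"
  assumes sg: "simple_graph n E" and fin: "finite E"
begin

lemma fbij: "bij_betw (edge_enum E) {..<(card E)} E" using edge_enum_bij[OF fin] .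

lemma fE: "e < (card E) \<Longrightarrow> (edge_enum E) e \<in> E" using fbij by (auto dest: bij_betwE)

lemma edge_props: "x \<in> E \<Longrightarrow> x \<subseteq> {..<n} \<and> card x = 2"
  using sg unfolding simple_graph_def by auto

lemma f_props: "e < (card E) \<Longrightarrow> (edge_enum E) e \<subseteq> {..<n} \<and> card ((edge_enum E) e) = 2 \<and> finite ((edge_enum E) e)"
  using edge_props[OF fE] by (auto intro: card_ge_0_finite)

lemma finj: "i < (card E) \<Longrightarrow> j < (card E) \<Longrightarrow> (edge_enum E) i = (edge_enum E) j \<Longrightarrow> i = j"
  using fbij unfolding bij_betw_def inj_on_def by auto

lemma card_pull: "card {e\<in>{..<(card E)}. P ((edge_enum E) e)} = card {x\<in>E. P x}"
proof -
  have "(edge_enum E) ` {e\<in>{..<(card E)}. P ((edge_enum E) e)} = {x\<in>E. P x}"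
  proof
    show "edge_enum E ` {e\<in>{..<card E}. P (edge_enum E e)} \<subseteq> {x\<in>E. P x}" using fE by auto
    show "{x\<in>E. P x} \<subseteq> edge_enum E ` {e\<in>{..<card E}. P (edge_enum E e)}"
    proof
      fix x assume x: "x \<in> {x\<in>E. P x}"
      then obtain e where e: "e < card E" "x = edge_enum E e"
        using fbij unfolding bij_betw_def by (metis (no_types, lifting) imageE lessThan_iff mem_Collect_eq)
      then show "x \<in> edge_enum E ` {e\<in>{..<card E}. P (edge_enum E e)}" using x by auto
    qed
  qed
  moreover have "inj_on (edge_enum E) {e\<in>{..<(card E)}. P ((edge_enum E) e)}"
    using fbij unfolding bij_betw_def inj_on_def by auto
  ultimately show ?thesis by (metis card_image)
qed

lemma inc_sum_col: "e < (card E) \<Longrightarrow> (\<Sum>a<n. inc E a e) = 2"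
proof -
  assume e: "e < (card E)"
  have "(\<Sum>a<n. inc E a e) = real (card {a\<in>{..<n}. a \<in> (edge_enum E) e})"
    unfolding inc_def by (rule sum_indicator_card) simp
  also have "{a\<in>{..<n}. a \<in> (edge_enum E) e} = (edge_enum E) e" using f_props[OF e] by auto
  finally show ?thesis using f_props[OF e] by simp
qed

lemma inc_gram: 
  assumes i: "i < (card E)" and j: "j < (card E)"
  shows "(\<Sum>a<n. inc E a i * inc E a j) = (if line_adj E i j then 1 else 0) + (if i = j then 2 else 0)"
proof -
  have "(\<Sum>a<n. inc E a i * inc E a j) = (\<Sum>a<n. if a \<in> (edge_enum E) i \<inter> (edge_enum E) j then 1 else 0)"
    unfolding inc_def by (intro sum.cong refl) auto
  also have "\<dots> = real (card {a\<in>{..<n}. a \<in> (edge_enum E) i \<inter> (edge_enum E) j})" by (rule sum_indicator_card) simp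
  also have "{a\<in>{..<n}. a \<in> (edge_enum E) i \<inter> (edge_enum E) j} = (edge_enum E) i \<inter> (edge_enum E) j" using f_props[OF i] by auto
  finally have eq: "(\<Sum>a<n. inc E a i * inc E a j) = real (card ((edge_enum E) i \<inter> (edge_enum E) j))" .
  show ?thesis
  proof (cases "i = j")
    case True
    then show ?thesis using eq f_props[OF i] unfolding line_adj_def by simp
  next
    case False
    then have neq: "(edge_enum E) i \<noteq> (edge_enum E) j" using finj i j by auto
    have fin2: "finite ((edge_enum E) i \<inter> (edge_enum E) j)" using f_props[OF i] by auto
    have le1: "card ((edge_enum E) i \<inter> (edge_enum E) j) \<le> 1"
    proof (rule ccontr)
      assume "\<not> card ((edge_enum E) i \<inter> (edge_enum E) j) \<le> 1"
      then have c2: "card ((edge_enum E) i \<inter> (edge_enum E) j) \<ge> 2" by simp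
      have "(edge_enum E) i \<inter> (edge_enum E) j = (edge_enum E) i"
        using card_subset_eq[of "(edge_enum E) i" "(edge_enum E) i \<inter> (edge_enum E) j"] c2 f_props[OF i] card_mono[of "(edge_enum E) i" "(edge_enum E) i \<inter> (edge_enum E) j"] by auto
      moreover have "(edge_enum E) i \<inter> (edge_enum E) j = (edge_enum E) j"
        using card_subset_eq[of "(edge_enum E) j" "(edge_enum E) i \<inter> (edge_enum E) j"] c2 f_props[OF j] card_mono[of "(edge_enum E) j" "(edge_enum E) i \<inter> (edge_enum E) j"] by auto
      ultimately show False using neq by simp
    qed
    have "card ((edge_enum E) i \<inter> (edge_enum E) j) = (if (edge_enum E) i \<inter> (edge_enum E) j \<noteq> {} then 1 else 0)"
    proof (cases "edge_enum E i \<inter> edge_enum E j = {}")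
      case False
      then have "card (edge_enum E i \<inter> edge_enum E j) > 0" using fin2 by (simp add: card_gt_0_iff)
      then show ?thesis using le1 False by simp
    qed simp
    then show ?thesis using eq False unfolding line_adj_def by auto
  qed
qed

lemma dG_degree:
  assumes a: "a < n"
  shows "dG E a = real (degree n (graph_adj E) a)"
proof -
  have "dG E a = real (card {e\<in>{..<(card E)}. a \<in> (edge_enum E) e})"
    unfolding dG_def inc_def by (rule sum_indicator_card) simp
  also have "\<dots> = real (card {x\<in>E. a \<in> x})" by (simp only: card_pull)
  also have "card {x\<in>E. a \<in> x} = card {j. j < n \<and> graph_adj E a j}"
  proof -
    have inj: "inj_on (\<lambda>j. {a,j}) {j. j < n \<and> graph_adj E a j}"
    proof (rule inj_onI)
      fix j j' assume j: "j \<in> {j. j < n \<and> graph_adj E a j}" and j': "j' \<in> {j. j < n \<and> graph_adj E a j}"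
        and eq: "{a,j} = {a,j'}"
      have "j \<noteq> a" using j edge_props unfolding graph_adj_def by force
      moreover have "j' \<noteq> a" using j' edge_props unfolding graph_adj_def by force
      ultimately show "j = j'" using eq by (auto simp: doubleton_eq_iff)
    qed
    have img: "(\<lambda>j. {a,j}) ` {j. j < n \<and> graph_adj E a j} = {x\<in>E. a \<in> x}"
    proof
      show "(\<lambda>j. {a,j}) ` {j. j < n \<and> graph_adj E a j} \<subseteq> {x\<in>E. a \<in> x}"
        unfolding graph_adj_def by auto
      show "{x\<in>E. a \<in> x} \<subseteq> (\<lambda>j. {a,j}) ` {j. j < n \<and> graph_adj E a j}"
      proof
        fix x assume x: "x \<in> {x\<in>E. a \<in> x}"
        then have xE: "x \<in> E" and ax: "a \<in> x" by auto
        from edge_props[OF xE] obtain p q where pq: "x = {p,q}" "p \<noteq> q" and sub: "x \<subseteq> {..<n}"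
          by (auto simp: card_2_iff)
        then obtain j where xj: "x = {a,j}" using ax by auto
        then have "j < n" using sub by auto
        then show "x \<in> (\<lambda>j. {a,j}) ` {j. j < n \<and> graph_adj E a j}"
          using xj xE unfolding graph_adj_def by auto
      qed
    qed
    show ?thesis using card_image[OF inj] img by simp
  qed
  finally show ?thesis unfolding degree_def by simp
qed

lemma dG_le: "a < n \<Longrightarrow> dG E a \<le> real (max_degree n E)"
proof -
  assume a: "a < n"
  have fin: "finite {degree n (graph_adj E) i | i. i < n}" by (rule finite_image_set) simp
  have "degree n (graph_adj E) a \<le> max_degree n E"
    unfolding max_degree_def by (rule Max_ge[OF fin]) (use a in auto)
  then show ?thesis using dG_degree[OF a] by simp
qed

lemma inc_Q:
  assumes a: "a < n" and b: "b < n"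
  shows "(\<Sum>e<(card E). inc E a e * inc E b e) = signless_laplacian n (graph_adj E) $$ (a,b)"
proof -
  have Q: "signless_laplacian n (graph_adj E) $$ (a,b) = (if a = b then real (degree n (graph_adj E) a) else 0)
     + (if graph_adj E a b then 1 else 0)"
    unfolding signless_laplacian_def deg_mat_def adj_mat_def using a b by simp
  show ?thesis
  proof (cases "a = b")
    case True
    have "(\<Sum>e<(card E). inc E a e * inc E b e) = dG E a"
      unfolding dG_def using True by (intro sum.cong refl) (simp add: inc_def)
    moreover have "\<not> graph_adj E a a" unfolding graph_adj_def using edge_props[of "{a}"] by auto
    ultimately show ?thesis using Q True dG_degree[OF a] by simp
  next
    case False
    have "(\<Sum>e<(card E). inc E a e * inc E b e) = real (card {e\<in>{..<(card E)}. a \<in> (edge_enum E) e \<and> b \<in> (edge_enum E) e})"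
    proof -
      have "(\<Sum>e<card E. inc E a e * inc E b e) = (\<Sum>e<card E. if a \<in> edge_enum E e \<and> b \<in> edge_enum E e then 1 else 0)"
        unfolding inc_def by (intro sum.cong refl) simp
      also have "\<dots> = real (card {e\<in>{..<card E}. a \<in> edge_enum E e \<and> b \<in> edge_enum E e})"
        by (rule sum_indicator_card) simp
      finally show ?thesis .
    qed
    also have "\<dots> = real (card {x\<in>E. a \<in> x \<and> b \<in> x})" 
      using card_pull[of "\<lambda>x. a \<in> x \<and> b \<in> x"] by (simp only:)
    also have "{x\<in>E. a \<in> x \<and> b \<in> x} = (if {a,b} \<in> E then {{a,b}} else {})"
    proof -
      have key: "\<And>x. x \<in> E \<Longrightarrow> a \<in> x \<Longrightarrow> b \<in> x \<Longrightarrow> x = {a,b}"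
      proof -
        fix x assume xE: "x \<in> E" and "a \<in> x" "b \<in> x"
        then have sub: "{a,b} \<subseteq> x" by auto
        have "card {a,b} = 2" using False by simp
        moreover have finx: "finite x" using edge_props[OF xE] by (auto intro: card_ge_0_finite)
        moreover have "card x = 2" using edge_props[OF xE] by simp
        ultimately have "{a,b} = x" using card_subset_eq[OF finx sub] by simp
        then show "x = {a,b}" by simp
      qed
      have sub: "{x\<in>E. a \<in> x \<and> b \<in> x} \<subseteq> {{a,b}}" using key by blast
      show ?thesis
      proof (cases "{a,b} \<in> E")
        case True
        then show ?thesis using sub by auto
      next
        case False
        then show ?thesis using sub by auto
      qed
    qed
    finally have eq: "(\<Sum>e<card E. inc E a e * inc E b e) = real (card (if {a, b} \<in> E then {{a, b}} else {}))" .
    show ?thesis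
    proof (cases "{a,b} \<in> E")
      case True
      then show ?thesis using eq Q False unfolding graph_adj_def by simp
    next
      case False
      then show ?thesis using eq Q \<open>a \<noteq> b\<close> unfolding graph_adj_def by simp
    qed
  qed
qed

lemma line_degree:
  assumes i: "i < (card E)"
  shows "real (degree (card E) (line_adj E) i) = (\<Sum>a<n. inc E a i * dG E a) - 2"
proof -
  have "real (degree (card E) (line_adj E) i) = (\<Sum>j<(card E). if line_adj E i j then 1 else 0)"
  proof -
    have "(\<Sum>j<card E. if line_adj E i j then 1 else 0) = real (card {j\<in>{..<card E}. line_adj E i j})"
      by (rule sum_indicator_card) simp
    moreover have "{j\<in>{..<card E}. line_adj E i j} = {j. j < card E \<and> line_adj E i j}" by auto
    ultimately show ?thesis unfolding degree_def by simp
  qed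
  also have "\<dots> = (\<Sum>j<(card E). (\<Sum>a<n. inc E a i * inc E a j) - (if i = j then 2 else 0))"
    by (intro sum.cong refl) (simp add: inc_gram i)
  also have "\<dots> = (\<Sum>j<(card E). \<Sum>a<n. inc E a i * inc E a j) - 2"
    using i by (simp add: sum_subtractf)
  also have "(\<Sum>j<(card E). \<Sum>a<n. inc E a i * inc E a j) = (\<Sum>a<n. inc E a i * dG E a)"
    by (subst sum.swap) (simp add: dG_def sum_distrib_left)
  finally show ?thesis .
qed

lemma line_degree_le:
  assumes i: "i < (card E)"
  shows "real (degree (card E) (line_adj E) i) \<le> 2 * real (max_degree n E) - 2"
proof -
  have "(\<Sum>a<n. inc E a i * dG E a) \<le> (\<Sum>a<n. inc E a i * real (max_degree n E))"
    by (rule sum_mono) (auto simp: inc_def dG_le)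
  also have "\<dots> = 2 * real (max_degree n E)"
    by (simp add: sum_distrib_right[symmetric] inc_sum_col[OF i])
  finally show ?thesis using line_degree[OF i] by simp
qed

end

lemma bilin_expand:
  fixes N :: nat
  assumes K: "\<forall>a<n. \<forall>b<n. K a b = (\<Sum>j<N. g j * u j a * u j b)"
  shows "(\<Sum>a<n. \<Sum>b<n. K a b * x a * y b) = (\<Sum>j<N. g j * ip n (u j) x * ip n (u j) y)"
proof -
  have "(\<Sum>a<n. \<Sum>b<n. K a b * x a * y b) = (\<Sum>a<n. \<Sum>b<n. \<Sum>j<N. g j * (u j a * x a) * (u j b * y b))"
    by (intro sum.cong refl) (simp add: K sum_distrib_left sum_distrib_right mult_ac)
  also have "\<dots> = (\<Sum>a<n. \<Sum>j<N. \<Sum>b<n. g j * (u j a * x a) * (u j b * y b))"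
    by (rule sum.cong[OF refl], rule sum.swap)
  also have "\<dots> = (\<Sum>j<N. \<Sum>a<n. \<Sum>b<n. g j * (u j a * x a) * (u j b * y b))"
    by (rule sum.swap)
  also have "\<dots> = (\<Sum>j<N. g j * ip n (u j) x * ip n (u j) y)"
    by (intro sum.cong refl) (simp add: ip_def sum_distrib_left sum_product mult_ac)
  finally show ?thesis .
qed

definition nB :: "nat set set \<Rightarrow> nat \<Rightarrow> (nat \<Rightarrow> real) \<Rightarrow> real" where
  "nB E n x = (\<Sum>a<n. (ip (card E) (inc E a) x)^2)"

context
  fixes n :: nat and E :: "nat set set"
  assumes sg: "simple_graph n E" and fin: "finite E"
begin

lemma M_entry: "i < card E \<Longrightarrow> j < card E \<Longrightarrow> A_alpha \<alpha> (card E) (line_adj E) $$ (i,j) =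
   \<alpha> * (if i = j then real (degree (card E) (line_adj E) i) else 0) + (1 - \<alpha>) * (if line_adj E i j then 1 else 0)"
  by (simp add: A_alpha_def deg_mat_def adj_mat_def)

lemma M_carrier: "A_alpha \<alpha> (card E) (line_adj E) \<in> carrier_mat (card E) (card E)"
  by (simp add: A_alpha_def deg_mat_def adj_mat_def)

lemma M_sym: "transpose_mat (A_alpha \<alpha> (card E) (line_adj E)) = A_alpha \<alpha> (card E) (line_adj E)"
  by (rule eq_matI) (insert M_carrier[of \<alpha>], auto simp: M_entry line_adj_def Int_commute)

lemma Q_carrier: "signless_laplacian n (graph_adj E) \<in> carrier_mat n n"
  by (simp add: signless_laplacian_def deg_mat_def adj_mat_def)

lemma Q_sym: "transpose_mat (signless_laplacian n (graph_adj E)) = signless_laplacian n (graph_adj E)"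
  by (rule eq_matI) (insert Q_carrier, auto simp: signless_laplacian_def deg_mat_def adj_mat_def
      graph_adj_def insert_commute)

lemma qf_M_bound:
  assumes a0: "0 \<le> \<alpha>" and a1: "\<alpha> \<le> 1"
  shows "qf (card E) (A_alpha \<alpha> (card E) (line_adj E)) x
     \<le> (2 * \<alpha> * real (max_degree n E) - 2) * ip (card E) x x + (1 - \<alpha>) * nB E n x"
proof -
  define m where "m = card E"
  define d where "d = (\<lambda>i. real (degree m (line_adj E) i))"
  define adj where "adj = (\<lambda>i j. if line_adj E i j then 1 else (0::real))"
  define \<Delta> where "\<Delta> = real (max_degree n E)"
  have e1: "qf m (A_alpha \<alpha> m (line_adj E)) x = \<alpha> * (\<Sum>i<m. d i * (x i * x i)) + (1 - \<alpha>) * (\<Sum>i<m. \<Sum>j<m. adj i j * x i * x j)"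
  proof -
    have "qf m (A_alpha \<alpha> m (line_adj E)) x = (\<Sum>i<m. \<Sum>j<m. \<alpha> * ((if i = j then d i else 0) * x i * x j) + (1 - \<alpha>) * (adj i j * x i * x j))"
      unfolding qf_def m_def by (intro sum.cong refl) (simp add: M_entry d_def adj_def m_def algebra_simps)
    also have "\<dots> = (\<Sum>i<m. \<alpha> * (d i * (x i * x i)) + (1 - \<alpha>) * (\<Sum>j<m. adj i j * x i * x j))"
    proof (intro sum.cong refl)
      fix i assume i: "i \<in> {..<m}"
      have "(\<Sum>j<m. \<alpha> * ((if i = j then d i else 0) * x i * x j)) = (\<Sum>j<m. if i = j then \<alpha> * (d i * (x i * x i)) else 0)"
        by (intro sum.cong refl) auto
      also have "\<dots> = \<alpha> * (d i * (x i * x i))" using i by simp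
      finally have "(\<Sum>j<m. \<alpha> * ((if i = j then d i else 0) * x i * x j)) = \<alpha> * (d i * (x i * x i))" .
      then show "(\<Sum>j<m. \<alpha> * ((if i = j then d i else 0) * x i * x j) + (1 - \<alpha>) * (adj i j * x i * x j))
         = \<alpha> * (d i * (x i * x i)) + (1 - \<alpha>) * (\<Sum>j<m. adj i j * x i * x j)"
        by (simp add: sum.distrib sum_distrib_left)
    qed
    also have "\<dots> = \<alpha> * (\<Sum>i<m. d i * (x i * x i)) + (1 - \<alpha>) * (\<Sum>i<m. \<Sum>j<m. adj i j * x i * x j)"
      by (simp add: sum.distrib sum_distrib_left)
    finally show ?thesis .
  qed
  have e2: "(\<Sum>i<m. \<Sum>j<m. adj i j * x i * x j) = nB E n x - 2 * ip m x x"
  proof -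
    have "(\<Sum>i<m. \<Sum>j<m. adj i j * x i * x j) = (\<Sum>i<m. \<Sum>j<m. (\<Sum>a<n. 1 * inc E a i * inc E a j) * x i * x j - (if i = j then 2 * (x i * x j) else 0))"
      by (intro sum.cong refl) (simp add: adj_def inc_gram[OF sg fin] m_def algebra_simps)
    also have "\<dots> = (\<Sum>i<m. \<Sum>j<m. (\<Sum>a<n. 1 * inc E a i * inc E a j) * x i * x j) - 2 * ip m x x"
      by (simp add: sum_subtractf ip_def sum_distrib_left)
    also have "(\<Sum>i<m. \<Sum>j<m. (\<Sum>a<n. 1 * inc E a i * inc E a j) * x i * x j) = (\<Sum>a<n. 1 * (ip m (\<lambda>i. inc E a i) x)^2)"
      by (rule quad_expand) simp
    finally show ?thesis unfolding nB_def m_def by simp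
  qed
  have e3: "(\<Sum>i<m. d i * (x i * x i)) \<le> (2 * \<Delta> - 2) * ip m x x"
  proof -
    have "(\<Sum>i<m. d i * (x i * x i)) \<le> (\<Sum>i<m. (2 * \<Delta> - 2) * (x i * x i))"
      by (rule sum_mono, rule mult_right_mono) (auto simp: d_def \<Delta>_def m_def line_degree_le[OF sg fin])
    then show ?thesis by (simp add: ip_def sum_distrib_left)
  qed
  have h: "\<alpha> * (\<Sum>i<m. d i * (x i * x i)) \<le> \<alpha> * ((2 * \<Delta> - 2) * ip m x x)"
    using e3 a0 by (rule mult_left_mono)
  have "qf m (A_alpha \<alpha> m (line_adj E)) x = \<alpha> * (\<Sum>i<m. d i * (x i * x i)) + (1 - \<alpha>) * (nB E n x - 2 * ip m x x)"
    using e1 e2 by simp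
  also have "\<dots> \<le> \<alpha> * ((2 * \<Delta> - 2) * ip m x x) + (1 - \<alpha>) * (nB E n x - 2 * ip m x x)"
    using h by simp
  also have "\<dots> = (2 * \<alpha> * \<Delta> - 2) * ip m x x + (1 - \<alpha>) * nB E n x"
    by (simp add: algebra_simps)
  finally show ?thesis unfolding m_def \<Delta>_def .
qed

lemma nB_sum_le_2m:
  fixes k :: nat
  assumes xs: "\<forall>i<k. \<forall>i'<k. ip (card E) (xs i) (xs i') = (if i = i' then 1 else 0)"
  shows "(\<Sum>i<k. nB E n (xs i)) \<le> 2 * real (card E)"
proof -
  have "(\<Sum>i<k. nB E n (xs i)) = (\<Sum>a<n. \<Sum>i<k. (ip (card E) (xs i) (inc E a))^2 / ip (card E) (xs i) (xs i))"
    unfolding nB_def by (subst sum.swap) (intro sum.cong refl, simp add: xs ip_comm)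
  also have "\<dots> \<le> (\<Sum>a<n. ip (card E) (inc E a) (inc E a))"
    by (rule sum_mono, rule bessel) (simp add: xs)
  also have "\<dots> = (\<Sum>e<card E. \<Sum>a<n. inc E a e)"
    unfolding ip_def by (subst sum.swap) (intro sum.cong refl, simp add: inc_def)
  also have "\<dots> = 2 * real (card E)" by (simp add: inc_sum_col[OF sg fin])
  finally show ?thesis .
qed

lemma nB_sum_le_S_k:
  fixes k :: nat
  assumes xs: "\<forall>i<k. \<forall>i'<k. ip (card E) (xs i) (xs i') = (if i = i' then 1 else 0)"
  shows "(\<Sum>i<k. nB E n (xs i)) \<le> S_k k (signless_laplacian n (graph_adj E))"
proof -
  define Q where "Q = signless_laplacian n (graph_adj E)"
  define m where "m = card E"
  obtain v where orth: "\<forall>j<n. \<forall>l<n. ip n (v j) (v l) = (if j = l then 1 else 0)"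
     and compl: "\<forall>a<n. \<forall>b<n. (\<Sum>j<n. v j a * v j b) = (if a = b then 1 else 0)"
     and dec: "\<forall>a<n. \<forall>b<n. Q $$ (a,b) = (\<Sum>j<n. eigvals Q ! j * v j a * v j b)"
    using spectral_fun[OF Q_carrier Q_sym] unfolding Q_def by blast
  define \<mu> where "\<mu> = eigvals Q"
  have len: "length \<mu> = n" and sorted: "sorted_wrt (\<ge>) \<mu>"
    using spectral_sorted[OF Q_carrier Q_sym] unfolding \<mu>_def Q_def by auto
  define w where "w = (\<lambda>j e. \<Sum>a<n. v j a * inc E a e)"
  have h1: "\<And>j y. ip m (w j) y = ip n (v j) (\<lambda>a. ip m (inc E a) y)"
    unfolding ip_def w_def by (simp add: sum_distrib_left sum_distrib_right mult_ac) (rule sum.swap)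
  have h2: "\<And>y. nB E n y = (\<Sum>j<n. (ip m (w j) y)^2)"
  proof -
    fix y
    have "nB E n y = ip n (\<lambda>a. ip m (inc E a) y) (\<lambda>a. ip m (inc E a) y)"
      unfolding nB_def ip_def[of n] m_def by (simp add: power2_eq_square)
    also have "\<dots> = (\<Sum>j<n. (ip n (v j) (\<lambda>a. ip m (inc E a) y))^2)" by (rule parseval[OF compl])
    finally show "nB E n y = (\<Sum>j<n. (ip m (w j) y)^2)" by (simp add: h1)
  qed
  have h3: "\<And>j l. j < n \<Longrightarrow> l < n \<Longrightarrow> ip m (w j) (w l) = (if j = l then \<mu> ! j else 0)"
  proof -
    fix j l assume j: "j < n" and l: "l < n"
    have inner: "\<And>a. a < n \<Longrightarrow> ip m (inc E a) (w l) = (\<Sum>b<n. Q $$ (a,b) * v l b)"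
    proof -
      fix a assume a: "a < n"
      have "ip m (inc E a) (w l) = (\<Sum>b<n. v l b * (\<Sum>e<m. inc E a e * inc E b e))"
        unfolding ip_def w_def by (simp add: sum_distrib_left mult_ac) (rule sum.swap)
      also have "\<dots> = (\<Sum>b<n. Q $$ (a,b) * v l b)"
        by (intro sum.cong refl) (simp add: inc_Q[OF sg fin a] Q_def m_def)
      finally show "ip m (inc E a) (w l) = (\<Sum>b<n. Q $$ (a,b) * v l b)" .
    qed
    have "ip m (w j) (w l) = (\<Sum>a<n. v j a * (\<Sum>b<n. Q $$ (a,b) * v l b))"
      unfolding h1 ip_def[of n] by (intro sum.cong refl) (simp add: inner)
    also have "\<dots> = (\<Sum>a<n. \<Sum>b<n. Q $$ (a,b) * v j a * v l b)"
      by (simp add: sum_distrib_left mult_ac)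
    also have "\<dots> = (\<Sum>p<n. \<mu> ! p * ip n (v p) (v j) * ip n (v p) (v l))"
      by (rule bilin_expand) (simp add: dec \<mu>_def)
    also have "\<dots> = (\<Sum>p<n. if p = j then (if j = l then \<mu> ! j else 0) else 0)"
      by (intro sum.cong refl) (auto simp: orth j l)
    also have "\<dots> = (if j = l then \<mu> ! j else 0)" using j by simp
    finally show "ip m (w j) (w l) = (if j = l then \<mu> ! j else 0)" .
  qed
  define s where "s = (\<lambda>j. \<Sum>i<k. (ip m (w j) (xs i))^2)"
  define t where "t = (\<lambda>j. s j / \<mu> ! j)"
  have mu0: "\<And>j. j < n \<Longrightarrow> 0 \<le> \<mu> ! j" using h3 ip_self_nonneg by metis
  have s_le: "\<And>j. j < n \<Longrightarrow> s j \<le> \<mu> ! j"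
  proof -
    fix j assume j: "j < n"
    have "(\<Sum>i<k. (ip m (xs i) (w j))^2 / ip m (xs i) (xs i)) \<le> ip m (w j) (w j)"
      by (rule bessel) (simp add: xs m_def)
    then show "s j \<le> \<mu> ! j" using h3[OF j j] xs unfolding s_def m_def by (simp add: ip_comm)
  qed
  have s0: "\<And>j. 0 \<le> s j" unfolding s_def by (auto intro: sum_nonneg)
  have st: "\<And>j. j < n \<Longrightarrow> s j = \<mu> ! j * t j"
  proof -
    fix j assume j: "j < n"
    show "s j = \<mu> ! j * t j"
    proof (cases "\<mu> ! j = 0")
      case True
      then show ?thesis using s_le[OF j] s0[of j] by simp
    qed (simp add: t_def)
  qed
  have t01: "\<And>j. j < n \<Longrightarrow> 0 \<le> t j \<and> t j \<le> 1"
  proof -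
    fix j assume j: "j < n"
    show "0 \<le> t j \<and> t j \<le> 1"
    proof (cases "\<mu> ! j = 0")
      case False
      then have "\<mu> ! j > 0" using mu0[OF j] by simp
      then show ?thesis using s_le[OF j] s0[of j] unfolding t_def by (simp add: divide_le_eq_1)
    qed (simp add: t_def)
  qed
  have tsum: "(\<Sum>j<n. t j) \<le> real k"
  proof -
    have "(\<Sum>j<n. t j) = (\<Sum>i<k. \<Sum>j<n. (ip m (w j) (xs i))^2 / ip m (w j) (w j))"
      unfolding t_def s_def by (subst sum.swap) (intro sum.cong refl, simp add: h3 sum_divide_distrib)
    also have "\<dots> \<le> (\<Sum>i<k. ip m (xs i) (xs i))"
      by (rule sum_mono, rule bessel) (simp add: h3)
    also have "\<dots> = real k" using xs by (simp add: m_def)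
    finally show ?thesis .
  qed
  have cnd: "(\<forall>j<n. 0 \<le> \<mu> ! j) \<or> (\<Sum>j<n. t j) = real k" using mu0 by auto
  have "(\<Sum>i<k. nB E n (xs i)) = (\<Sum>j<n. s j)"
    unfolding h2 s_def by (rule sum.swap)
  also have "\<dots> = (\<Sum>j<n. \<mu> ! j * t j)" by (intro sum.cong refl) (simp add: st)
  also have "\<dots> \<le> sum_list (take k \<mu>)"
    by (rule rearr[OF sorted len t01 tsum cnd])
  finally show ?thesis unfolding S_k_def \<mu>_def Q_def .
qed

end


theorem theorem6p2:
  fixes n :: nat and E :: "nat set set" and \<alpha> :: real
  assumes "simple_graph n E"
    and "card E \<ge> 1"
    and "0 \<le> \<alpha>" and "\<alpha> \<le> 1"
  shows "(\<forall>k. 1 \<le> k \<and> k \<le> min n (card E) \<longrightarrow>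
           S_k k (A_alpha \<alpha> (card E) (line_adj E))
             \<le> 2 * real k * (\<alpha> * real (max_degree n E) - 1)
               + (1 - \<alpha>) * S_k k (signless_laplacian n (graph_adj E)))
       \<and> (card E > n \<longrightarrow> (\<forall>k. n + 1 \<le> k \<and> k \<le> card E \<longrightarrow>
           S_k k (A_alpha \<alpha> (card E) (line_adj E))
             \<le> 2 * \<alpha> * real k * (real (max_degree n E) - 1)
               + 2 * (1 - \<alpha>) * (real (card E) - real k)))"
proof -
  note sg = assms(1)
  have fin: "finite E" using assms(2) by (intro card_ge_0_finite) simp
  define \<Delta> where "\<Delta> = real (max_degree n E)"
  define M where "M = A_alpha \<alpha> (card E) (line_adj E)"
  have key: "\<And>k. k \<le> card E \<Longrightarrow> \<exists>u. (\<forall>i<k. \<forall>i'<k. ip (card E) (u i) (u i') = (if i = i' then 1 else 0))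
     \<and> S_k k M \<le> (2 * \<alpha> * \<Delta> - 2) * real k + (1 - \<alpha>) * (\<Sum>i<k. nB E n (u i))"
  proof -
    fix k assume k: "k \<le> card E"
    obtain u where orth: "\<forall>j<card E. \<forall>l<card E. ip (card E) (u j) (u l) = (if j = l then 1 else 0)"
      and S: "S_k k M = (\<Sum>i<k. qf (card E) M (u i))"
      using spectral_S_k[OF M_carrier[OF sg fin] M_sym[OF sg fin] k] unfolding M_def by blast
    have orthk: "\<forall>i<k. \<forall>i'<k. ip (card E) (u i) (u i') = (if i = i' then 1 else 0)"
      using orth k by auto
    have "(\<Sum>i<k. qf (card E) M (u i)) \<le> (\<Sum>i<k. (2 * \<alpha> * \<Delta> - 2) * ip (card E) (u i) (u i) + (1 - \<alpha>) * nB E n (u i))"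
      unfolding M_def \<Delta>_def by (rule sum_mono, rule qf_M_bound[OF sg fin assms(3,4)])
    then have "S_k k M \<le> (\<Sum>i<k. (2 * \<alpha> * \<Delta> - 2) * ip (card E) (u i) (u i) + (1 - \<alpha>) * nB E n (u i))"
      using S by simp
    also have "\<dots> = (2 * \<alpha> * \<Delta> - 2) * real k + (1 - \<alpha>) * (\<Sum>i<k. nB E n (u i))"
      using orthk by (simp add: sum.distrib sum_distrib_left)
    finally show "\<exists>u. (\<forall>i<k. \<forall>i'<k. ip (card E) (u i) (u i') = (if i = i' then 1 else 0))
     \<and> S_k k M \<le> (2 * \<alpha> * \<Delta> - 2) * real k + (1 - \<alpha>) * (\<Sum>i<k. nB E n (u i))"
      using orthk by blast
  qed
  have a1: "0 \<le> 1 - \<alpha>" using assms(4) by simp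
  show ?thesis
  proof (intro conjI allI impI)
    fix k assume k: "1 \<le> k \<and> k \<le> min n (card E)"
    then obtain u where orthk: "\<forall>i<k. \<forall>i'<k. ip (card E) (u i) (u i') = (if i = i' then 1 else 0)"
      and S: "S_k k M \<le> (2 * \<alpha> * \<Delta> - 2) * real k + (1 - \<alpha>) * (\<Sum>i<k. nB E n (u i))"
      using key by force
    have "(1 - \<alpha>) * (\<Sum>i<k. nB E n (u i)) \<le> (1 - \<alpha>) * S_k k (signless_laplacian n (graph_adj E))"
      by (rule mult_left_mono[OF nB_sum_le_S_k[OF sg fin orthk] a1])
    then show "S_k k (A_alpha \<alpha> (card E) (line_adj E))
             \<le> 2 * real k * (\<alpha> * real (max_degree n E) - 1)
               + (1 - \<alpha>) * S_k k (signless_laplacian n (graph_adj E))"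
      using S unfolding M_def \<Delta>_def by (simp add: algebra_simps)
  next
    fix k assume "n < card E" and k: "n + 1 \<le> k \<and> k \<le> card E"
    then obtain u where orthk: "\<forall>i<k. \<forall>i'<k. ip (card E) (u i) (u i') = (if i = i' then 1 else 0)"
      and S: "S_k k M \<le> (2 * \<alpha> * \<Delta> - 2) * real k + (1 - \<alpha>) * (\<Sum>i<k. nB E n (u i))"
      using key by force
    have "(1 - \<alpha>) * (\<Sum>i<k. nB E n (u i)) \<le> (1 - \<alpha>) * (2 * real (card E))"
      by (rule mult_left_mono[OF nB_sum_le_2m[OF sg fin orthk] a1])
    then show "S_k k (A_alpha \<alpha> (card E) (line_adj E))
             \<le> 2 * \<alpha> * real k * (real (max_degree n E) - 1)
               + 2 * (1 - \<alpha>) * (real (card E) - real k)"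
      using S unfolding M_def \<Delta>_def by (simp add: algebra_simps)
  qed
qed

end
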